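(* Let $A=\mathrm{diag}(\lambda_1,\dots,\lambda_k)$ with distinct real $\lambda_j$, $|\lambda_j|>1$, and let $\mathbf 1\in\mathbb R^k$ be the all-ones vector. Let $M$ be the unique solution of the Lyapunov equation $M=A^{-1}MA^{-T}+\mathbf 1\mathbf 1^T$. Then $M\succ0$ and $$\mathbf 1^TM^{-1}\mathbf 1=1-|\det A|^{-2}.$$ *)

theory Defs
  imports "HOL-Analysis.Analysis"
begin

definition diag_mat :: "real ^ 'n \<Rightarrow> real ^ 'n ^ 'n" where
  "diag_mat l = (\<chi> i j. if i = j then l $ i else 0)"

definition pos_def :: "real ^ 'n ^ 'n \<Rightarrow> bool" where
  "pos_def M \<longleftrightarrow> transpose M = M \<and> (\<forall>x. x \<noteq> 0 \<longrightarrow> x \<bullet> (M *v x) > 0)"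

definition ones_vec :: "real ^ 'n" where
  "ones_vec = (\<chi> i. 1)"

end

theory Submission
  imports Defs "HOL-Computational_Algebra.Polynomial"
begin

lemma det_row_replace_id:
  fixes v :: "real ^ 'n"
  shows "det (\<chi> i. if i = k then v else row i (mat 1 :: real^'n^'n)) = v $ k"
proof -
  have eq: "sum (\<lambda>i. v$i *s row i (mat 1 :: real^'n^'n)) UNIV = v"
    by (simp add: vec_eq_iff row_def mat_def sum.If_cases if_distrib cong: if_cong)
  from cramer_lemma_transpose[of k v "mat 1 :: real^'n^'n"] show ?thesis unfolding eq by simp
qed

lemma rank1_det_aux:
  fixes u v :: "real^'n"
  assumes "k \<notin> S"
  shows "det (\<chi> i. if i = k then v else if i \<in> S then row i (mat 1 :: real^'n^'n) + u$i *s v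
           else row i (mat 1 :: real^'n^'n)) = v$k"
proof -
  have "finite S" by simp
  then show ?thesis using assms
  proof (induction S rule: finite_induct)
    case empty
    then show ?case using det_row_replace_id[of k v] by (simp only: empty_iff if_False)
  next
    case (insert j S)
    define e where "e = (\<lambda>i. row i (mat 1 :: real^'n^'n))"
    define c where "c = (\<lambda>i. if i = k then v else if i \<in> S then e i + u$i *s v else e i)"
    have jk: "j \<noteq> k" using insert by auto
    have m: "(\<chi> i. if i = k then v else if i \<in> insert j S then e i + u$i *s v else e i)
        = (\<chi> i. if i = j then e i + u$i *s v else c i)"
      using jk by (simp add: vec_eq_iff c_def)
    have m1: "(\<chi> i. if i = j then e i else c i) = (\<chi> i. c i)"
      using jk insert.hyps by (simp add: vec_eq_iff c_def)
    have m2: "det (\<chi> i. if i = j then v else c i) = 0"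
      by (rule det_identical_rows[OF jk]) (simp add: row_def c_def jk)
    have "det (\<chi> i. if i = j then e i + u$i *s v else c i)
        = det (\<chi> i. if i = j then e i else c i) + det (\<chi> i. if i = j then u$i *s v else c i)"
      by (rule det_row_add)
    also have "det (\<chi> i. if i = j then u$i *s v else c i) = det (\<chi> i. if i = j then u$j *s v else c i)"
      by (rule arg_cong[where f=det]) (simp add: vec_eq_iff)
    also have "\<dots> = u$j * det (\<chi> i. if i = j then v else c i)"
      by (rule det_row_mul)
    finally have "det (\<chi> i. if i = k then v else if i \<in> insert j S then e i + u$i *s v else e i) = v$k"
      using m m1 m2 insert.IH insert.prems jk unfolding c_def e_def by simp
    then show ?case unfolding e_def .
  qed
qed

lemma rank1_det_aux2:
  fixes u v :: "real^'n"
  shows "det (\<chi> i. if i \<in> S then row i (mat 1 :: real^'n^'n) + u$i *s v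
           else row i (mat 1 :: real^'n^'n)) = 1 + (\<Sum>i\<in>S. u$i * v$i)"
proof -
  have "finite S" by simp
  then show ?thesis
  proof (induction S rule: finite_induct)
    case empty
    have "(\<chi> i. row i (mat 1 :: real^'n^'n)) = mat 1" by (simp add: vec_eq_iff row_def)
    then show ?case by simp
  next
    case (insert k S)
    define e where "e = (\<lambda>i. row i (mat 1 :: real^'n^'n))"
    define c where "c = (\<lambda>i. if i \<in> S then e i + u$i *s v else e i)"
    have m: "(\<chi> i. if i \<in> insert k S then e i + u$i *s v else e i)
        = (\<chi> i. if i = k then e i + u$i *s v else c i)"
      by (simp add: vec_eq_iff c_def)
    have m1: "(\<chi> i. if i = k then e i else c i) = (\<chi> i. c i)"
      using insert.hyps by (simp add: vec_eq_iff c_def)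
    have m2: "det (\<chi> i. if i = k then v else c i) = v$k"
      using rank1_det_aux[of k S v u] insert.hyps
      by (simp add: c_def e_def cong: if_cong)
    have "det (\<chi> i. if i = k then e i + u$i *s v else c i)
        = det (\<chi> i. if i = k then e i else c i) + det (\<chi> i. if i = k then u$i *s v else c i)"
      by (rule det_row_add)
    also have "det (\<chi> i. if i = k then u$i *s v else c i) = det (\<chi> i. if i = k then u$k *s v else c i)"
      by (rule arg_cong[where f=det]) (simp add: vec_eq_iff)
    also have "\<dots> = u$k * det (\<chi> i. if i = k then v else c i)"
      by (rule det_row_mul)
    finally have "det (\<chi> i. if i \<in> insert k S then e i + u$i *s v else e i) = 1 + (\<Sum>i\<in>insert k S. u$i * v$i)"
      unfolding m m1 m2 using insert.IH insert.hyps unfolding c_def e_def by simp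
    then show ?case unfolding e_def .
  qed
qed

lemma rank1_det:
  fixes u v :: "real^'n"
  shows "det (mat 1 + (\<chi> i j. u$i * v$j) :: real^'n^'n) = 1 + u \<bullet> v"
proof -
  have "(mat 1 + (\<chi> i j. u$i * v$j) :: real^'n^'n) =
     (\<chi> i. if i \<in> UNIV then row i (mat 1 :: real^'n^'n) + u$i *s v else row i (mat 1 :: real^'n^'n))"
    by (simp add: vec_eq_iff row_def mat_def)
  then show ?thesis using rank1_det_aux2[of UNIV u v] by (simp add: inner_vec_def)
qed


lemma vandermonde_nz:
  fixes x :: "real^'n" and a :: "'n \<Rightarrow> real"
  assumes inj: "inj a" and x: "x \<noteq> 0"
  shows "\<exists>k::nat. (\<Sum>i\<in>UNIV. x$i * a i ^ k) \<noteq> 0"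
proof (rule ccontr)
  assume H: "\<not> ?thesis"
  obtain i0 where i0: "x$i0 \<noteq> 0" using x by (auto simp: vec_eq_iff)
  define p where "p = (\<Prod>j\<in>UNIV-{i0}. [:- a j, 1:])"
  have pv: "poly p z = (\<Prod>j\<in>UNIV-{i0}. z - a j)" for z
    by (simp add: p_def poly_prod)
  have z: "poly p (a i) = 0" if "i \<noteq> i0" for i
    unfolding pv using that by (auto intro!: prod_zero)
  have nz: "poly p (a i0) \<noteq> 0"
    unfolding pv using inj by (auto simp: inj_eq)
  have "(\<Sum>i\<in>UNIV. x$i * poly p (a i)) = x$i0 * poly p (a i0) + (\<Sum>i\<in>UNIV-{i0}. x$i * poly p (a i))"
    by (rule sum.remove) auto
  also have "(\<Sum>i\<in>UNIV-{i0}. x$i * poly p (a i)) = 0"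
    by (rule sum.neutral) (auto simp: z)
  finally have A: "(\<Sum>i\<in>UNIV. x$i * poly p (a i)) \<noteq> 0" using i0 nz by simp
  have "(\<Sum>i\<in>UNIV. x$i * poly p (a i)) = (\<Sum>i\<in>UNIV. \<Sum>k\<le>degree p. coeff p k * (x$i * a i ^ k))"
    by (simp add: poly_altdef sum_distrib_left algebra_simps)
  also have "\<dots> = (\<Sum>k\<le>degree p. coeff p k * (\<Sum>i\<in>UNIV. x$i * a i ^ k))"
    by (subst sum.swap) (simp add: sum_distrib_left)
  also have "\<dots> = 0" using H by simp
  finally show False using A by simp
qed

lemma quad_sums:
  fixes x :: "real^'n" and a :: "'n \<Rightarrow> real"
  assumes small: "\<And>i. \<bar>a i\<bar> < 1"
  shows "(\<lambda>k. (\<Sum>i\<in>UNIV. x$i * a i ^ k)\<^sup>2) sums (\<Sum>i\<in>UNIV. \<Sum>j\<in>UNIV. x$i * x$j / (1 - a i * a j))"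
proof -
  have g: "(\<lambda>k. x$i * x$j * (a i * a j)^k) sums (x$i * x$j / (1 - a i * a j))" for i j
  proof -
    have "norm (a i * a j) < 1"
      using small[of i] small[of j] by (simp add: abs_mult mult_strict_mono' abs_ge_zero)
        (metis abs_ge_zero abs_mult_less mult_1_left small)
    from sums_mult[OF geometric_sums[OF this], of "x$i * x$j"] show ?thesis by simp
  qed
  have "(\<lambda>k. \<Sum>i\<in>UNIV. \<Sum>j\<in>UNIV. x$i * x$j * (a i * a j)^k) sums (\<Sum>i\<in>UNIV. \<Sum>j\<in>UNIV. x$i * x$j / (1 - a i * a j))"
    by (intro sums_sum g)
  moreover have "(\<Sum>i\<in>UNIV. \<Sum>j\<in>UNIV. x$i * x$j * (a i * a j)^k) = (\<Sum>i\<in>UNIV. x$i * a i ^ k)\<^sup>2" for k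
    by (simp add: power2_eq_square sum_product power_mult_distrib algebra_simps)
  ultimately show ?thesis by simp
qed

lemma inv_props:
  fixes A :: "real^'n^'n"
  assumes "invertible A"
  shows "A ** matrix_inv A = mat 1 \<and> matrix_inv A ** A = mat 1"
  using assms unfolding invertible_def matrix_inv_def by (rule someI_ex)

lemma inv_unique:
  fixes A B :: "real^'n^'n"
  assumes "A ** B = mat 1"
  shows "matrix_inv A = B"
proof -
  have inv: "invertible A" using assms invertible_right_inverse by blast
  have "matrix_inv A = matrix_inv A ** (A ** B)" using assms by simp
  also have "\<dots> = (matrix_inv A ** A) ** B" by (simp add: matrix_mul_assoc)
  also have "\<dots> = B" using inv_props[OF inv] by simp
  finally show ?thesis .
qed

lemma diag_left:
  fixes l :: "real^'n" and N :: "real^'m^'n"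
  shows "diag_mat l ** N = (\<chi> i j. l$i * N$i$j)"
proof -
  have "(\<Sum>k\<in>UNIV. (if i = k then l$i else 0) * N$k$j) = l$i * N$i$j" for i j
  proof -
    have "(\<Sum>k\<in>UNIV. (if i = k then l$i else 0) * N$k$j) = (\<Sum>k\<in>UNIV. if i = k then l$i * N$k$j else 0)"
      by (rule sum.cong) auto
    also have "\<dots> = l$i * N$i$j" by simp
    finally show ?thesis .
  qed
  then show ?thesis by (simp add: vec_eq_iff matrix_matrix_mult_def diag_mat_def)
qed

lemma diag_right:
  fixes l :: "real^'n" and N :: "real^'n^'m"
  shows "N ** diag_mat l = (\<chi> i j. N$i$j * l$j)"
proof -
  have "(\<Sum>k\<in>UNIV. N$i$k * (if k = j then l$k else 0)) = N$i$j * l$j" for i j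
  proof -
    have "(\<Sum>k\<in>UNIV. N$i$k * (if k = j then l$k else 0)) = (\<Sum>k\<in>UNIV. if k = j then N$i$k * l$k else 0)"
      by (rule sum.cong) auto
    also have "\<dots> = N$i$j * l$j" by simp
    finally show ?thesis .
  qed
  then show ?thesis by (simp add: vec_eq_iff matrix_matrix_mult_def diag_mat_def)
qed

lemma transpose_diag: "transpose (diag_mat l) = diag_mat l"
  by (simp add: vec_eq_iff transpose_def diag_mat_def)

theorem mainTheorem5:
  fixes lam :: "real ^ 'n" and M :: "real ^ 'n ^ 'n"
  assumes distinct: "inj (\<lambda>i. lam $ i)"
    and big: "\<And>i. \<bar>lam $ i\<bar> > 1"
    and lyap: "M = matrix_inv (diag_mat lam) ** M ** transpose (matrix_inv (diag_mat lam))
                   + (\<chi> i j. 1)"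
  shows "pos_def M \<and>
         ones_vec \<bullet> (matrix_inv M *v ones_vec) = 1 - 1 / \<bar>det (diag_mat lam)\<bar> ^ 2"
proof -
  define a where "a = (\<chi> i. 1 / lam$i)"
  define A where "A = diag_mat lam"
  define B where "B = diag_mat a"
  have lnz: "lam$i \<noteq> 0" for i using big[of i] by auto
  have AB: "A ** B = mat 1"
    using lnz unfolding A_def B_def diag_right by (simp add: a_def diag_mat_def mat_def vec_eq_iff)
  have invA: "matrix_inv A = B" by (rule inv_unique[OF AB])
  have lyap2: "M = B ** M ** transpose B + (\<chi> i j. 1)"
    using lyap invA A_def by simp
  have ent: "(B ** M ** transpose B) $ i $ j = a$i * M$i$j * a$j" for i j
    by (simp add: B_def diag_left diag_right transpose_diag)
  have small: "\<bar>a$i\<bar> < 1" for i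
    using big[of i] by (simp add: a_def)
  have prod_small: "a$i * a$j \<noteq> 1" for i j
  proof -
    have "\<bar>a$i * a$j\<bar> < 1" using small[of i] small[of j]
      by (metis abs_ge_zero abs_mult abs_mult_less mult_1_left)
    then show ?thesis by auto
  qed
  have Mij: "M$i$j = 1 / (1 - a$i * a$j)" for i j
  proof -
    have "M$i$j = a$i * M$i$j * a$j + 1"
      using arg_cong[OF lyap2, of "\<lambda>N. N$i$j"] ent[of i j] by simp
    then have "M$i$j * (1 - a$i * a$j) = 1" by (simp add: algebra_simps)
    then show ?thesis using prod_small[of i j] by (simp add: field_simps)
  qed
  have inja: "inj (\<lambda>i. a$i)"
    using distinct lnz by (auto simp: inj_def a_def)
  have quad: "x \<bullet> (M *v x) > 0" if x0: "x \<noteq> 0" for x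
  proof -
    have "x \<bullet> (M *v x) = (\<Sum>i\<in>UNIV. \<Sum>j\<in>UNIV. x$i * x$j / (1 - a$i * a$j))"
      by (simp add: inner_vec_def matrix_vector_mult_def Mij sum_distrib_left algebra_simps)
    moreover have S: "(\<lambda>k. (\<Sum>i\<in>UNIV. x$i * (a$i) ^ k)\<^sup>2) sums (\<Sum>i\<in>UNIV. \<Sum>j\<in>UNIV. x$i * x$j / (1 - a$i * a$j))"
      using quad_sums[of "\<lambda>i. a$i" x] small by simp
    moreover obtain k where "(\<Sum>i\<in>UNIV. x$i * (a$i) ^ k) \<noteq> 0"
      using vandermonde_nz[OF inja x0] by blast
    ultimately show ?thesis
      using suminf_pos2[OF sums_summable[OF S], of k] sums_unique[OF S] by simp
  qed
  have sym: "transpose M = M"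
    by (simp add: vec_eq_iff transpose_def Mij mult.commute)
  have pd: "pos_def M" using sym quad by (simp add: pos_def_def)
  have injM: "inj ((*v) M)"
  proof (rule injI)
    fix x y assume "M *v x = M *v y"
    then have "M *v (x - y) = 0" by (simp add: matrix_vector_mult_diff_distrib)
    then show "x = y" using quad[of "x - y"] by (cases "x = y") auto
  qed
  have dM: "det M \<noteq> 0"
    using det_nz_iff_inj[of "(*v) M"] injM by simp
  have invM: "invertible M" using dM invertible_det_nz by blast
  define w where "w = matrix_inv M *v ones_vec"
  have Mw: "M *v w = ones_vec"
    using inv_props[OF invM] by (simp add: w_def matrix_vector_mul_assoc)
  have Mw': "(\<Sum>k\<in>UNIV. M$i$k * w$k) = 1" for i
    using arg_cong[OF Mw, of "\<lambda>v. v$i"] by (simp add: matrix_vector_mult_def ones_vec_def)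
  have R: "M ** (\<chi> i j. (-w)$i * ones_vec$j) = - (\<chi> i j. 1)"
    using Mw' by (simp add: vec_eq_iff matrix_matrix_mult_def ones_vec_def sum_negf)
  have "B ** M ** transpose B = M - (\<chi> i j. 1)" using lyap2 by (simp add: algebra_simps)
  also have "\<dots> = M ** (mat 1 + (\<chi> i j. (-w)$i * ones_vec$j))"
    unfolding matrix_add_ldistrib R by simp
  finally have "det (B ** M ** transpose B) = det (M ** (mat 1 + (\<chi> i j. (-w)$i * ones_vec$j)))"
    by simp
  then have "det B * det M * det B = det M * (1 + (-w) \<bullet> ones_vec)"
    using rank1_det[of "-w" ones_vec] by (simp add: det_mul)
  then have "det M * (w \<bullet> ones_vec + (det B)\<^sup>2 - 1) = 0"
    by (simp add: power2_eq_square algebra_simps)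
  then have E: "w \<bullet> ones_vec = 1 - (det B)\<^sup>2" using dM by simp
  have "det A * det B = 1" using AB by (metis det_I det_mul)
  then have dB: "det B = 1 / det A"
    by (metis divide_eq_eq mult.commute mult_zero_left zero_neq_one)
  show ?thesis
    using pd E dB by (simp add: w_def A_def inner_commute power_one_over)
qed

end
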